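(* Let $\mathcal C$ be a small exact category. The map $\gamma_{0,\mathcal C}:\mathsf{Cob}_0(\mathcal C)\to K_0(\mathcal C)$, $[M]\mapsto\sum_{b\in M}s(b)[X_b]$, is a well-defined isomorphism of abelian groups.
   Context: An exact category is an additive category $\mathcal C$ that is a full additive subcategory of an abelian category $\mathcal A$ with the following property: if $0\to X_1\to X_2\to X_3\to0$ is exact in $\mathcal A$ with $X_1,X_3$ in $\mathcal C$, then $X_2$ is isomorphic to an object of $\mathcal C$. Exact sequences in $\mathcal C$ are those exact sequences of $\mathcal A$ with all terms in $\mathcal C$. $K_0(\mathcal C)$ is generated by $[X]$, $X\in\mathrm{Ob}(\mathcal C)$, with $[X_2]=[X_1]+[X_3]$ for each exact sequence $0\to X_1\to X_2\to X_3\to 0$ in $\mathcal C$. A $\mathcal C$-decorated 0-foam is a finite set of points $b$, each with a sign $s(b)\in\{\pm1\}$ and an object $X_b\in\mathcal C$; $-M$ reverses signs. A $\mathcal C$-decorated 1-foam is a finite oriented graph (loops, multiple edges and circles allowed) with trivalent interior vertices. Each vertex is either "in" (two edges in, one out) or "out" (one in, two out); the two edges of equal orientation type are thin and the third is thick. The foam carries a flat connection with fibers objects of $\mathcal C$. At each vertex the thin edges are ordered, and an exact sequence $0\to X_{\mathrm{first}}\to X_{\mathrm{thick}}\to X_{\mathrm{second}}\to0$ in $\mathcal C$ of nearby fibers is fixed. Boundary points carry the fiber and sign $+$ if the edge points toward them, $-$ otherwise. A 1-foam $U$ is a cobordism from $M_0$ to $M_1$ if $\partial U\cong M_1\sqcup(-M_0)$.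 $\mathsf{Cob}_0(\mathcal C)$ is the set of $\mathcal C$-decorated 0-foams modulo the equivalence relation generated by cobordism, an abelian group under disjoint union. *)

theory Defs
  imports "HOL-Algebra.Free_Abelian_Groups" "HOL-Algebra.Coset" "HOL-Library.Multiset"
begin

text \<open>A small category: a set of objects, a set of arrows, domain, codomain,
  composition (cComp g f = g after f) and identities.\<close>
record ('o, 'm) cat =
  cOb   :: "'o set"
  cAr   :: "'m set"
  cDom  :: "'m \<Rightarrow> 'o"
  cCod  :: "'m \<Rightarrow> 'o"
  cComp :: "'m \<Rightarrow> 'm \<Rightarrow> 'm"
  cId   :: "'o \<Rightarrow> 'm"

definition is_category :: "('o, 'm) cat \<Rightarrow> bool" where
  "is_category C \<longleftrightarrow>
     (\<forall>f\<in>cAr C. cDom C f \<in> cOb C \<and> cCod C f \<in> cOb C) \<and>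
     (\<forall>x\<in>cOb C. cId C x \<in> cAr C \<and> cDom C (cId C x) = x \<and> cCod C (cId C x) = x) \<and>
     (\<forall>f\<in>cAr C. \<forall>g\<in>cAr C. cCod C f = cDom C g \<longrightarrow>
        cComp C g f \<in> cAr C \<and> cDom C (cComp C g f) = cDom C f \<and> cCod C (cComp C g f) = cCod C g) \<and>
     (\<forall>f\<in>cAr C. cComp C f (cId C (cDom C f)) = f \<and> cComp C (cId C (cCod C f)) f = f) \<and>
     (\<forall>f\<in>cAr C. \<forall>g\<in>cAr C. \<forall>h\<in>cAr C. cCod C f = cDom C g \<and> cCod C g = cDom C h \<longrightarrow>
        cComp C h (cComp C g f) = cComp C (cComp C h g) f)"

definition hom :: "('o, 'm) cat \<Rightarrow> 'o \<Rightarrow> 'o \<Rightarrow> 'm set" where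
  "hom C x y = {f \<in> cAr C. cDom C f = x \<and> cCod C f = y}"

definition zero_object :: "('o, 'm) cat \<Rightarrow> 'o \<Rightarrow> bool" where
  "zero_object C z \<longleftrightarrow> z \<in> cOb C \<and>
     (\<forall>x\<in>cOb C. (\<exists>!f. f \<in> hom C x z) \<and> (\<exists>!f. f \<in> hom C z x))"

definition zero_arrow :: "('o, 'm) cat \<Rightarrow> 'm \<Rightarrow> bool" where
  "zero_arrow C f \<longleftrightarrow> f \<in> cAr C \<and>
     (\<exists>z. zero_object C z \<and> (\<exists>a\<in>hom C (cDom C f) z. \<exists>b\<in>hom C z (cCod C f). f = cComp C b a))"

definition is_kernel :: "('o, 'm) cat \<Rightarrow> 'm \<Rightarrow> 'm \<Rightarrow> bool" where
  "is_kernel C k f \<longleftrightarrow> k \<in> cAr C \<and> f \<in> cAr C \<and> cCod C k = cDom C f \<and>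
     zero_arrow C (cComp C f k) \<and>
     (\<forall>h\<in>cAr C. cCod C h = cDom C f \<and> zero_arrow C (cComp C f h) \<longrightarrow>
        (\<exists>!u. u \<in> hom C (cDom C h) (cDom C k) \<and> cComp C k u = h))"

definition is_cokernel :: "('o, 'm) cat \<Rightarrow> 'm \<Rightarrow> 'm \<Rightarrow> bool" where
  "is_cokernel C c f \<longleftrightarrow> c \<in> cAr C \<and> f \<in> cAr C \<and> cDom C c = cCod C f \<and>
     zero_arrow C (cComp C c f) \<and>
     (\<forall>h\<in>cAr C. cDom C h = cCod C f \<and> zero_arrow C (cComp C h f) \<longrightarrow>
        (\<exists>!u. u \<in> hom C (cCod C c) (cCod C h) \<and> cComp C u c = h))"

definition is_mono :: "('o, 'm) cat \<Rightarrow> 'm \<Rightarrow> bool" where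
  "is_mono C f \<longleftrightarrow> f \<in> cAr C \<and>
     (\<forall>g\<in>cAr C. \<forall>h\<in>cAr C. cCod C g = cDom C f \<and> cCod C h = cDom C f \<and> cDom C g = cDom C h \<and>
        cComp C f g = cComp C f h \<longrightarrow> g = h)"

definition is_epi :: "('o, 'm) cat \<Rightarrow> 'm \<Rightarrow> bool" where
  "is_epi C f \<longleftrightarrow> f \<in> cAr C \<and>
     (\<forall>g\<in>cAr C. \<forall>h\<in>cAr C. cDom C g = cCod C f \<and> cDom C h = cCod C f \<and> cCod C g = cCod C h \<and>
        cComp C g f = cComp C h f \<longrightarrow> g = h)"

definition is_product :: "('o, 'm) cat \<Rightarrow> 'o \<Rightarrow> 'o \<Rightarrow> 'o \<Rightarrow> 'm \<Rightarrow> 'm \<Rightarrow> bool" where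
  "is_product C a b p p1 p2 \<longleftrightarrow> p1 \<in> hom C p a \<and> p2 \<in> hom C p b \<and>
     (\<forall>x\<in>cOb C. \<forall>f\<in>hom C x a. \<forall>g\<in>hom C x b.
        \<exists>!u. u \<in> hom C x p \<and> cComp C p1 u = f \<and> cComp C p2 u = g)"

definition is_coproduct :: "('o, 'm) cat \<Rightarrow> 'o \<Rightarrow> 'o \<Rightarrow> 'o \<Rightarrow> 'm \<Rightarrow> 'm \<Rightarrow> bool" where
  "is_coproduct C a b q i1 i2 \<longleftrightarrow> i1 \<in> hom C a q \<and> i2 \<in> hom C b q \<and>
     (\<forall>x\<in>cOb C. \<forall>f\<in>hom C a x. \<forall>g\<in>hom C b x.
        \<exists>!u. u \<in> hom C q x \<and> cComp C u i1 = f \<and> cComp C u i2 = g)"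

definition abelian :: "('o, 'm) cat \<Rightarrow> bool" where
  "abelian C \<longleftrightarrow> is_category C \<and> (\<exists>z. zero_object C z) \<and>
     (\<forall>a\<in>cOb C. \<forall>b\<in>cOb C. \<exists>p p1 p2. is_product C a b p p1 p2) \<and>
     (\<forall>a\<in>cOb C. \<forall>b\<in>cOb C. \<exists>q i1 i2. is_coproduct C a b q i1 i2) \<and>
     (\<forall>f\<in>cAr C. \<exists>k. is_kernel C k f) \<and>
     (\<forall>f\<in>cAr C. \<exists>c. is_cokernel C c f) \<and>
     (\<forall>f. is_mono C f \<longrightarrow> (\<exists>g. is_kernel C f g)) \<and>
     (\<forall>f. is_epi C f \<longrightarrow> (\<exists>g. is_cokernel C f g))"

definition iso_objects :: "('o, 'm) cat \<Rightarrow> 'o \<Rightarrow> 'o \<Rightarrow> bool" where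
  "iso_objects C x y \<longleftrightarrow> (\<exists>f\<in>hom C x y. \<exists>g\<in>hom C y x. cComp C g f = cId C x \<and> cComp C f g = cId C y)"

definition short_exact :: "('o, 'm) cat \<Rightarrow> 'm \<Rightarrow> 'm \<Rightarrow> bool" where
  "short_exact C f g \<longleftrightarrow> is_kernel C f g \<and> is_cokernel C g f"

text \<open>An exact category C, given as the object set S of a full subcategory of the
  abelian category A: additive (contains a zero object of A and, for any two of its
  objects, a product of them in A), and closed under extensions up to isomorphism.\<close>
definition exact_category :: "('o, 'm) cat \<Rightarrow> 'o set \<Rightarrow> bool" where
  "exact_category A S \<longleftrightarrow> abelian A \<and> S \<subseteq> cOb A \<and>
     (\<exists>z\<in>S. zero_object A z) \<and>
     (\<forall>x\<in>S. \<forall>y\<in>S. \<exists>p p1 p2. p \<in> S \<and> is_product A x y p p1 p2) \<and>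
     (\<forall>f g. short_exact A f g \<and> cDom A f \<in> S \<and> cCod A g \<in> S \<longrightarrow>
        (\<exists>y\<in>S. iso_objects A (cCod A f) y))"

definition exact_in :: "('o, 'm) cat \<Rightarrow> 'o set \<Rightarrow> 'm \<Rightarrow> 'm \<Rightarrow> bool" where
  "exact_in A S f g \<longleftrightarrow> short_exact A f g \<and> cDom A f \<in> S \<and> cCod A f \<in> S \<and> cCod A g \<in> S"

definition K0_free :: "'o set \<Rightarrow> ('o \<Rightarrow>\<^sub>0 int) monoid" where
  "K0_free S = free_Abelian_group S"

definition K0_rels :: "('o, 'm) cat \<Rightarrow> 'o set \<Rightarrow> ('o \<Rightarrow>\<^sub>0 int) set" where
  "K0_rels A S = {frag_of (cCod A f) - frag_of (cDom A f) - frag_of (cCod A g) | f g. exact_in A S f g}"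

definition K0 :: "('o, 'm) cat \<Rightarrow> 'o set \<Rightarrow> ('o \<Rightarrow>\<^sub>0 int) set monoid" where
  "K0 A S = K0_free S Mod generate (K0_free S) (K0_rels A S)"

definition K0_class :: "('o, 'm) cat \<Rightarrow> 'o set \<Rightarrow> ('o \<Rightarrow>\<^sub>0 int) \<Rightarrow> ('o \<Rightarrow>\<^sub>0 int) set" where
  "K0_class A S x = r_coset (K0_free S) (generate (K0_free S) (K0_rels A S)) x"

text \<open>A C-decorated 0-foam, up to isomorphism, is a finite multiset of points, each
  given by its sign (True = +1, False = -1) and its object.\<close>
type_synonym 'o foam0 = "(bool \<times> 'o) multiset"

definition valid_foam0 :: "'o set \<Rightarrow> 'o foam0 \<Rightarrow> bool" where
  "valid_foam0 S M \<longleftrightarrow> (\<forall>p\<in>#M. snd p \<in> S)"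

definition neg_foam0 :: "'o foam0 \<Rightarrow> 'o foam0" where
  "neg_foam0 M = image_mset (\<lambda>(s, X). (\<not> s, X)) M"

text \<open>A 1-foam: a finite oriented graph with vertex set fV and edge set fE (edge e goes
  from fSrc e to fTgt e), the trivialised flat connection (fiber fFib e along edge e),
  and at every interior vertex v the ordered thin edge-ends fFirst v, fSecond v, the thick
  edge-end fThick v, and an exact sequence given by fF v, fG v.  An edge-end is a pair
  (e, b): b = True is the head (target) end of e, b = False its tail (source) end.\<close>
record ('o, 'm) foam1 =
  fV      :: "nat set"
  fE      :: "nat set"
  fSrc    :: "nat \<Rightarrow> nat"
  fTgt    :: "nat \<Rightarrow> nat"
  fFib    :: "nat \<Rightarrow> 'o"
  fFirst  :: "nat \<Rightarrow> nat \<times> bool"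
  fSecond :: "nat \<Rightarrow> nat \<times> bool"
  fThick  :: "nat \<Rightarrow> nat \<times> bool"
  fF      :: "nat \<Rightarrow> 'm"
  fG      :: "nat \<Rightarrow> 'm"

definition end_vertex :: "('o, 'm) foam1 \<Rightarrow> nat \<times> bool \<Rightarrow> nat" where
  "end_vertex U eb = (if snd eb then fTgt U (fst eb) else fSrc U (fst eb))"

definition ends_at :: "('o, 'm) foam1 \<Rightarrow> nat \<Rightarrow> (nat \<times> bool) set" where
  "ends_at U v = {eb. fst eb \<in> fE U \<and> end_vertex U eb = v}"

definition boundary_vertices :: "('o, 'm) foam1 \<Rightarrow> nat set" where
  "boundary_vertices U = {v \<in> fV U. card (ends_at U v) = 1}"

definition interior_vertices :: "('o, 'm) foam1 \<Rightarrow> nat set" where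
  "interior_vertices U = {v \<in> fV U. card (ends_at U v) = 3}"

definition is_foam1 :: "('o, 'm) cat \<Rightarrow> 'o set \<Rightarrow> ('o, 'm) foam1 \<Rightarrow> bool" where
  "is_foam1 A S U \<longleftrightarrow> finite (fV U) \<and> finite (fE U) \<and>
     (\<forall>e\<in>fE U. fSrc U e \<in> fV U \<and> fTgt U e \<in> fV U \<and> fFib U e \<in> S) \<and>
     (\<forall>v\<in>fV U. card (ends_at U v) = 1 \<or> card (ends_at U v) = 3) \<and>
     (\<forall>v\<in>interior_vertices U.
        ends_at U v = {fFirst U v, fSecond U v, fThick U v} \<and>
        fFirst U v \<noteq> fSecond U v \<and> fFirst U v \<noteq> fThick U v \<and> fSecond U v \<noteq> fThick U v \<and>
        snd (fFirst U v) = snd (fSecond U v) \<and> snd (fThick U v) \<noteq> snd (fFirst U v) \<and>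
        exact_in A S (fF U v) (fG U v) \<and>
        cDom A (fF U v) = fFib U (fst (fFirst U v)) \<and>
        cCod A (fF U v) = fFib U (fst (fThick U v)) \<and>
        cCod A (fG U v) = fFib U (fst (fSecond U v)))"

text \<open>The boundary 0-foam: each univalent vertex, with the fiber of its edge and sign +
  iff the edge points toward it.\<close>
definition foam_boundary :: "('o, 'm) foam1 \<Rightarrow> 'o foam0" where
  "foam_boundary U = image_mset
     (\<lambda>v. let eb = the_elem (ends_at U v) in (snd eb, fFib U (fst eb)))
     (mset_set (boundary_vertices U))"

definition cobordant :: "('o, 'm) cat \<Rightarrow> 'o set \<Rightarrow> 'o foam0 \<Rightarrow> 'o foam0 \<Rightarrow> bool" where
  "cobordant A S M0 M1 \<longleftrightarrow> valid_foam0 S M0 \<and> valid_foam0 S M1 \<and>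
     (\<exists>U. is_foam1 A S U \<and> foam_boundary U = M1 + neg_foam0 M0)"

definition cob_equiv :: "('o, 'm) cat \<Rightarrow> 'o set \<Rightarrow> 'o foam0 \<Rightarrow> 'o foam0 \<Rightarrow> bool" where
  "cob_equiv A S M N \<longleftrightarrow> valid_foam0 S M \<and> valid_foam0 S N \<and> equivclp (cobordant A S) M N"

definition cob_class :: "('o, 'm) cat \<Rightarrow> 'o set \<Rightarrow> 'o foam0 \<Rightarrow> 'o foam0 set" where
  "cob_class A S M = {N. cob_equiv A S M N}"

definition Cob0 :: "('o, 'm) cat \<Rightarrow> 'o set \<Rightarrow> 'o foam0 set monoid" where
  "Cob0 A S = \<lparr>carrier = {cob_class A S M | M. valid_foam0 S M},
              monoid.mult = (\<lambda>P Q. {N. \<exists>M1\<in>P. \<exists>M2\<in>Q. cob_equiv A S (M1 + M2) N}),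
              one = cob_class A S {#}\<rparr>"

definition gamma0_rep :: "('o, 'm) cat \<Rightarrow> 'o set \<Rightarrow> 'o foam0 \<Rightarrow> ('o \<Rightarrow>\<^sub>0 int) set" where
  "gamma0_rep A S M = K0_class A S
     (sum_mset (image_mset (\<lambda>(s, X). if s then frag_of X else - frag_of X) M))"

definition gamma0 :: "('o, 'm) cat \<Rightarrow> 'o set \<Rightarrow> 'o foam0 set \<Rightarrow> ('o \<Rightarrow>\<^sub>0 int) set" where
  "gamma0 A S P = the_elem (gamma0_rep A S ` P)"

end

theory Submission
  imports Defs
begin

definition dbl :: "nat \<Rightarrow> nat" where "dbl v = 2 * v"
definition od :: "nat \<Rightarrow> nat" where "od v = Suc (2 * v)"
lemma dbl_od_simps[simp]: "even (dbl v)" "odd (od v)" "dbl v div 2 = v" "od v div 2 = v"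
  "dbl v = dbl w \<longleftrightarrow> v = w" "od v = od w \<longleftrightarrow> v = w" "dbl v \<noteq> od w" "od w \<noteq> dbl v"
  by (auto simp: dbl_def od_def) presburger+

lemma dbl_od_inv[simp]: "even v \<Longrightarrow> dbl (v div 2) = v" "odd v \<Longrightarrow> od (v div 2) = v"
  by (auto simp: dbl_def od_def)

definition lft1 :: "nat \<times> bool \<Rightarrow> nat \<times> bool" where "lft1 eb = (dbl (fst eb), snd eb)"
definition lft2 :: "nat \<times> bool \<Rightarrow> nat \<times> bool" where "lft2 eb = (od (fst eb), snd eb)"

definition foam_union :: "('o,'m) foam1 \<Rightarrow> ('o,'m) foam1 \<Rightarrow> ('o,'m) foam1" where
 "foam_union U W = \<lparr>fV = dbl ` fV U \<union> od ` fV W,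
   fE = dbl ` fE U \<union> od ` fE W,
   fSrc = (\<lambda>e. if even e then dbl (fSrc U (e div 2)) else od (fSrc W (e div 2))),
   fTgt = (\<lambda>e. if even e then dbl (fTgt U (e div 2)) else od (fTgt W (e div 2))),
   fFib = (\<lambda>e. if even e then fFib U (e div 2) else fFib W (e div 2)),
   fFirst = (\<lambda>v. if even v then lft1 (fFirst U (v div 2)) else lft2 (fFirst W (v div 2))),
   fSecond = (\<lambda>v. if even v then lft1 (fSecond U (v div 2)) else lft2 (fSecond W (v div 2))),
   fThick = (\<lambda>v. if even v then lft1 (fThick U (v div 2)) else lft2 (fThick W (v div 2))),
   fF = (\<lambda>v. if even v then fF U (v div 2) else fF W (v div 2)),
   fG = (\<lambda>v. if even v then fG U (v div 2) else fG W (v div 2))\<rparr>"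

lemma inj_lft1: "inj lft1" by (auto simp: inj_def lft1_def prod_eq_iff)
lemma inj_lft2: "inj lft2" by (auto simp: inj_def lft2_def prod_eq_iff)

lemma ends_at_union:
  "ends_at (foam_union U W) v =
     (if even v then lft1 ` ends_at U (v div 2) else lft2 ` ends_at W (v div 2))"
proof (cases "even v")
  case True
  have "eb \<in> ends_at (foam_union U W) v \<longleftrightarrow> eb \<in> lft1 ` ends_at U (v div 2)" for eb
  proof
    assume a: "eb \<in> ends_at (foam_union U W) v"
    then have "fst eb \<in> dbl ` fE U \<union> od ` fE W"
      by (simp add: ends_at_def foam_union_def)
    then show "eb \<in> lft1 ` ends_at U (v div 2)"
    proof
      assume "fst eb \<in> dbl ` fE U"
      then obtain e where e: "e \<in> fE U" "fst eb = dbl e" by auto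
      have "end_vertex (foam_union U W) eb = v" using a by (simp add: ends_at_def)
      then have "end_vertex U (e, snd eb) = v div 2"
        using e by (auto simp: end_vertex_def foam_union_def split: if_splits)
      then show ?thesis using e
        by (intro image_eqI[of _ _ "(e, snd eb)"]) (auto simp: ends_at_def lft1_def prod_eq_iff)
    next
      assume "fst eb \<in> od ` fE W"
      then obtain e where e: "e \<in> fE W" "fst eb = od e" by auto
      have "end_vertex (foam_union U W) eb = v" using a by (simp add: ends_at_def)
      then have False using e True by (auto simp: end_vertex_def foam_union_def split: if_splits)
      then show ?thesis ..
    qed
  next
    assume "eb \<in> lft1 ` ends_at U (v div 2)"
    then obtain e b where "eb = (dbl e, b)" "e \<in> fE U" "end_vertex U (e,b) = v div 2"
      by (auto simp: ends_at_def lft1_def)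
    then show "eb \<in> ends_at (foam_union U W) v" using True
      by (auto simp: ends_at_def foam_union_def end_vertex_def)
  qed
  then show ?thesis using True by auto
next
  case False
  have "eb \<in> ends_at (foam_union U W) v \<longleftrightarrow> eb \<in> lft2 ` ends_at W (v div 2)" for eb
  proof
    assume a: "eb \<in> ends_at (foam_union U W) v"
    then have "fst eb \<in> dbl ` fE U \<union> od ` fE W"
      by (simp add: ends_at_def foam_union_def)
    then show "eb \<in> lft2 ` ends_at W (v div 2)"
    proof
      assume "fst eb \<in> od ` fE W"
      then obtain e where e: "e \<in> fE W" "fst eb = od e" by auto
      have "end_vertex (foam_union U W) eb = v" using a by (simp add: ends_at_def)
      then have "end_vertex W (e, snd eb) = v div 2"
        using e by (auto simp: end_vertex_def foam_union_def split: if_splits)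
      then show ?thesis using e
        by (intro image_eqI[of _ _ "(e, snd eb)"]) (auto simp: ends_at_def lft2_def prod_eq_iff)
    next
      assume "fst eb \<in> dbl ` fE U"
      then obtain e where e: "e \<in> fE U" "fst eb = dbl e" by auto
      have "end_vertex (foam_union U W) eb = v" using a by (simp add: ends_at_def)
      then have False using e False by (auto simp: end_vertex_def foam_union_def split: if_splits)
      then show ?thesis ..
    qed
  next
    assume "eb \<in> lft2 ` ends_at W (v div 2)"
    then obtain e b where "eb = (od e, b)" "e \<in> fE W" "end_vertex W (e,b) = v div 2"
      by (auto simp: ends_at_def lft2_def)
    then show "eb \<in> ends_at (foam_union U W) v" using False
      by (auto simp: ends_at_def foam_union_def end_vertex_def)
  qed
  then show ?thesis using False by auto
qed

lemma card_ends_at_union: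
  "card (ends_at (foam_union U W) v) =
     (if even v then card (ends_at U (v div 2)) else card (ends_at W (v div 2)))"
  by (simp add: ends_at_union card_image inj_on_subset[OF inj_lft1] inj_on_subset[OF inj_lft2])

lemma fV_union: "v \<in> fV (foam_union U W) \<longleftrightarrow>
   (if even v then v div 2 \<in> fV U else v div 2 \<in> fV W)"
proof -
  have "even v \<Longrightarrow> v = dbl (v div 2)" "odd v \<Longrightarrow> v = od (v div 2)" by (auto simp: dbl_def od_def)
  then show ?thesis by (auto simp: foam_union_def image_iff) (metis dbl_od_inv, metis dbl_od_inv)
qed

lemma interior_union: "v \<in> interior_vertices (foam_union U W) \<longleftrightarrow>
   (if even v then v div 2 \<in> interior_vertices U else v div 2 \<in> interior_vertices W)"
  by (simp add: interior_vertices_def fV_union card_ends_at_union)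

lemma boundary_union: "v \<in> boundary_vertices (foam_union U W) \<longleftrightarrow>
   (if even v then v div 2 \<in> boundary_vertices U else v div 2 \<in> boundary_vertices W)"
  by (simp add: boundary_vertices_def fV_union card_ends_at_union)

lemma lft_simps[simp]: "fst (lft1 x) = dbl (fst x)" "snd (lft1 x) = snd x"
  "fst (lft2 x) = od (fst x)" "snd (lft2 x) = snd x"
  by (auto simp: lft1_def lft2_def)

lemma union_simps[simp]:
  "fFib (foam_union U W) (dbl e) = fFib U e"
  "fFib (foam_union U W) (od e) = fFib W e"
  "fSrc (foam_union U W) (dbl e) = dbl (fSrc U e)"
  "fSrc (foam_union U W) (od e) = od (fSrc W e)"
  "fTgt (foam_union U W) (dbl e) = dbl (fTgt U e)"
  "fTgt (foam_union U W) (od e) = od (fTgt W e)"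
  "fFirst (foam_union U W) (dbl e) = lft1 (fFirst U e)"
  "fFirst (foam_union U W) (od e) = lft2 (fFirst W e)"
  "fSecond (foam_union U W) (dbl e) = lft1 (fSecond U e)"
  "fSecond (foam_union U W) (od e) = lft2 (fSecond W e)"
  "fThick (foam_union U W) (dbl e) = lft1 (fThick U e)"
  "fThick (foam_union U W) (od e) = lft2 (fThick W e)"
  "fF (foam_union U W) (dbl e) = fF U e"
  "fF (foam_union U W) (od e) = fF W e"
  "fG (foam_union U W) (dbl e) = fG U e"
  "fG (foam_union U W) (od e) = fG W e"
  by (auto simp: foam_union_def)

lemma even_odd_cases:
  obtains w where "v = dbl w" "even v" "v div 2 = w" | w where "v = od w" "odd v" "v div 2 = w"
  by (cases "even v") (metis dbl_od_inv(1), metis dbl_od_inv(2))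

lemma interior_ok:
  assumes "v \<in> interior_vertices U"
    "ends_at U v = {fFirst U v, fSecond U v, fThick U v} \<and>
        fFirst U v \<noteq> fSecond U v \<and> fFirst U v \<noteq> fThick U v \<and> fSecond U v \<noteq> fThick U v \<and>
        snd (fFirst U v) = snd (fSecond U v) \<and> snd (fThick U v) \<noteq> snd (fFirst U v) \<and>
        exact_in A S (fF U v) (fG U v) \<and>
        cDom A (fF U v) = fFib U (fst (fFirst U v)) \<and>
        cCod A (fF U v) = fFib U (fst (fThick U v)) \<and>
        cCod A (fG U v) = fFib U (fst (fSecond U v))"
  shows
    "ends_at (foam_union U W) (dbl v) = {fFirst (foam_union U W) (dbl v), fSecond (foam_union U W) (dbl v), fThick (foam_union U W) (dbl v)} \<and>
        fFirst (foam_union U W) (dbl v) \<noteq> fSecond (foam_union U W) (dbl v) \<and> fFirst (foam_union U W) (dbl v) \<noteq> fThick (foam_union U W) (dbl v) \<and> fSecond (foam_union U W) (dbl v) \<noteq> fThick (foam_union U W) (dbl v) \<and>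
        snd (fFirst (foam_union U W) (dbl v)) = snd (fSecond (foam_union U W) (dbl v)) \<and> snd (fThick (foam_union U W) (dbl v)) \<noteq> snd (fFirst (foam_union U W) (dbl v)) \<and>
        exact_in A S (fF (foam_union U W) (dbl v)) (fG (foam_union U W) (dbl v)) \<and>
        cDom A (fF (foam_union U W) (dbl v)) = fFib (foam_union U W) (fst (fFirst (foam_union U W) (dbl v))) \<and>
        cCod A (fF (foam_union U W) (dbl v)) = fFib (foam_union U W) (fst (fThick (foam_union U W) (dbl v))) \<and>
        cCod A (fG (foam_union U W) (dbl v)) = fFib (foam_union U W) (fst (fSecond (foam_union U W) (dbl v)))"
proof -
  have e: "ends_at (foam_union U W) (dbl v) = lft1 ` ends_at U v"
    by (simp only: ends_at_union) simp
  show ?thesis unfolding e union_simps using assms by (simp add: inj_eq[OF inj_lft1])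
qed

lemma interior_ok2:
  assumes "v \<in> interior_vertices W"
    "ends_at W v = {fFirst W v, fSecond W v, fThick W v} \<and>
        fFirst W v \<noteq> fSecond W v \<and> fFirst W v \<noteq> fThick W v \<and> fSecond W v \<noteq> fThick W v \<and>
        snd (fFirst W v) = snd (fSecond W v) \<and> snd (fThick W v) \<noteq> snd (fFirst W v) \<and>
        exact_in A S (fF W v) (fG W v) \<and>
        cDom A (fF W v) = fFib W (fst (fFirst W v)) \<and>
        cCod A (fF W v) = fFib W (fst (fThick W v)) \<and>
        cCod A (fG W v) = fFib W (fst (fSecond W v))"
  shows
    "ends_at (foam_union U W) (od v) = {fFirst (foam_union U W) (od v), fSecond (foam_union U W) (od v), fThick (foam_union U W) (od v)} \<and>
        fFirst (foam_union U W) (od v) \<noteq> fSecond (foam_union U W) (od v) \<and> fFirst (foam_union U W) (od v) \<noteq> fThick (foam_union U W) (od v) \<and> fSecond (foam_union U W) (od v) \<noteq> fThick (foam_union U W) (od v) \<and>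
        snd (fFirst (foam_union U W) (od v)) = snd (fSecond (foam_union U W) (od v)) \<and> snd (fThick (foam_union U W) (od v)) \<noteq> snd (fFirst (foam_union U W) (od v)) \<and>
        exact_in A S (fF (foam_union U W) (od v)) (fG (foam_union U W) (od v)) \<and>
        cDom A (fF (foam_union U W) (od v)) = fFib (foam_union U W) (fst (fFirst (foam_union U W) (od v))) \<and>
        cCod A (fF (foam_union U W) (od v)) = fFib (foam_union U W) (fst (fThick (foam_union U W) (od v))) \<and>
        cCod A (fG (foam_union U W) (od v)) = fFib (foam_union U W) (fst (fSecond (foam_union U W) (od v)))"
proof -
  have e: "ends_at (foam_union U W) (od v) = lft2 ` ends_at W v"
    by (simp only: ends_at_union) simp
  show ?thesis unfolding e union_simps using assms by (simp add: inj_eq[OF inj_lft2])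
qed

lemma foam_union_is_foam1:
  assumes "is_foam1 A S U" "is_foam1 A S W"
  shows "is_foam1 A S (foam_union U W)"
proof -
  let ?U = "foam_union U W"
  have 1: "finite (fV ?U)" "finite (fE ?U)"
    using assms by (auto simp: is_foam1_def foam_union_def)
  have 2: "\<forall>e\<in>fE ?U. fSrc ?U e \<in> fV ?U \<and> fTgt ?U e \<in> fV ?U \<and> fFib ?U e \<in> S"
    using assms unfolding is_foam1_def by (auto simp: foam_union_def)
  have 3: "\<forall>v\<in>fV ?U. card (ends_at ?U v) = 1 \<or> card (ends_at ?U v) = 3"
    using assms unfolding is_foam1_def by (auto simp: fV_union card_ends_at_union split: if_splits)
  have 4: "\<forall>v\<in>interior_vertices ?U. ends_at ?U v = {fFirst ?U v, fSecond ?U v, fThick ?U v} \<and>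
        fFirst ?U v \<noteq> fSecond ?U v \<and> fFirst ?U v \<noteq> fThick ?U v \<and> fSecond ?U v \<noteq> fThick ?U v \<and>
        snd (fFirst ?U v) = snd (fSecond ?U v) \<and> snd (fThick ?U v) \<noteq> snd (fFirst ?U v) \<and>
        exact_in A S (fF ?U v) (fG ?U v) \<and>
        cDom A (fF ?U v) = fFib ?U (fst (fFirst ?U v)) \<and>
        cCod A (fF ?U v) = fFib ?U (fst (fThick ?U v)) \<and>
        cCod A (fG ?U v) = fFib ?U (fst (fSecond ?U v))"
  proof
    fix v assume v: "v \<in> interior_vertices ?U"
    show "ends_at ?U v = {fFirst ?U v, fSecond ?U v, fThick ?U v} \<and>
        fFirst ?U v \<noteq> fSecond ?U v \<and> fFirst ?U v \<noteq> fThick ?U v \<and> fSecond ?U v \<noteq> fThick ?U v \<and>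
        snd (fFirst ?U v) = snd (fSecond ?U v) \<and> snd (fThick ?U v) \<noteq> snd (fFirst ?U v) \<and>
        exact_in A S (fF ?U v) (fG ?U v) \<and>
        cDom A (fF ?U v) = fFib ?U (fst (fFirst ?U v)) \<and>
        cCod A (fF ?U v) = fFib ?U (fst (fThick ?U v)) \<and>
        cCod A (fG ?U v) = fFib ?U (fst (fSecond ?U v))"
    proof (cases v rule: even_odd_cases)
      case (1 w)
      then have w: "w \<in> interior_vertices U" using v by (simp add: interior_union)
      have "ends_at U w = {fFirst U w, fSecond U w, fThick U w} \<and>
        fFirst U w \<noteq> fSecond U w \<and> fFirst U w \<noteq> fThick U w \<and> fSecond U w \<noteq> fThick U w \<and>
        snd (fFirst U w) = snd (fSecond U w) \<and> snd (fThick U w) \<noteq> snd (fFirst U w) \<and>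
        exact_in A S (fF U w) (fG U w) \<and>
        cDom A (fF U w) = fFib U (fst (fFirst U w)) \<and>
        cCod A (fF U w) = fFib U (fst (fThick U w)) \<and>
        cCod A (fG U w) = fFib U (fst (fSecond U w))"
        using w assms(1) unfolding is_foam1_def by blast
      from interior_ok[OF w this, of W] show ?thesis using 1 by simp
    next
      case (2 w)
      then have w: "w \<in> interior_vertices W" using v by (simp add: interior_union)
      have "ends_at W w = {fFirst W w, fSecond W w, fThick W w} \<and>
        fFirst W w \<noteq> fSecond W w \<and> fFirst W w \<noteq> fThick W w \<and> fSecond W w \<noteq> fThick W w \<and>
        snd (fFirst W w) = snd (fSecond W w) \<and> snd (fThick W w) \<noteq> snd (fFirst W w) \<and>
        exact_in A S (fF W w) (fG W w) \<and>
        cDom A (fF W w) = fFib W (fst (fFirst W w)) \<and>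
        cCod A (fF W w) = fFib W (fst (fThick W w)) \<and>
        cCod A (fG W w) = fFib W (fst (fSecond W w))"
        using w assms(2) unfolding is_foam1_def by blast
      from interior_ok2[OF w this, of U] show ?thesis using 2 by simp
    qed
  qed
  show ?thesis unfolding is_foam1_def using 1 2 3 4 by (intro conjI)
qed

lemma finite_bv: "is_foam1 A S U \<Longrightarrow> finite (boundary_vertices U)"
  by (auto simp: is_foam1_def boundary_vertices_def)

lemma bv_union_eq: "boundary_vertices (foam_union U W) =
   dbl ` boundary_vertices U \<union> od ` boundary_vertices W"
proof -
  have "x \<in> boundary_vertices (foam_union U W) \<longleftrightarrow> x \<in> dbl ` boundary_vertices U \<union> od ` boundary_vertices W" for x
    by (cases x rule: even_odd_cases) (auto simp: boundary_union)
  then show ?thesis by blast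
qed

lemma foam_boundary_union:
  assumes "is_foam1 A S U" "is_foam1 A S W"
  shows "foam_boundary (foam_union U W) = foam_boundary U + foam_boundary W"
proof -
  let ?g = "\<lambda>Z v. let eb = the_elem (ends_at Z v) in (snd eb, fFib Z (fst eb))"
  have f: "finite (boundary_vertices U)" "finite (boundary_vertices W)"
    using assms finite_bv by blast+
  have "mset_set (boundary_vertices (foam_union U W)) =
     image_mset dbl (mset_set (boundary_vertices U)) + image_mset od (mset_set (boundary_vertices W))"
    unfolding bv_union_eq
    by (subst mset_set_Union) (use f in \<open>auto simp: image_mset_mset_set inj_on_def\<close>)
  moreover have "image_mset (?g (foam_union U W)) (image_mset dbl (mset_set (boundary_vertices U)))
      = image_mset (?g U) (mset_set (boundary_vertices U))"
    unfolding multiset.map_comp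
  proof (rule image_mset_cong)
    fix v assume "v \<in># mset_set (boundary_vertices U)"
    then have "card (ends_at U v) = 1" using f by (simp add: boundary_vertices_def)
    then obtain eb where "ends_at U v = {eb}" by (meson card_1_singletonE)
    then show "(?g (foam_union U W) \<circ> dbl) v = ?g U v"
      by (simp add: ends_at_union Let_def)
  qed
  moreover have "image_mset (?g (foam_union U W)) (image_mset od (mset_set (boundary_vertices W)))
      = image_mset (?g W) (mset_set (boundary_vertices W))"
    unfolding multiset.map_comp
  proof (rule image_mset_cong)
    fix v assume "v \<in># mset_set (boundary_vertices W)"
    then have "card (ends_at W v) = 1" using f by (simp add: boundary_vertices_def)
    then obtain eb where "ends_at W v = {eb}" by (meson card_1_singletonE)
    then show "(?g (foam_union U W) \<circ> od) v = ?g W v"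
      by (simp add: ends_at_union Let_def)
  qed
  ultimately show ?thesis unfolding foam_boundary_def by simp
qed

definition empty_foam :: "('o,'m) foam1" where
  "empty_foam = \<lparr>fV = {}, fE = {}, fSrc = \<lambda>_. 0, fTgt = \<lambda>_. 0, fFib = \<lambda>_. undefined,
    fFirst = \<lambda>_. (0, False), fSecond = \<lambda>_. (0, False), fThick = \<lambda>_. (0, False),
    fF = \<lambda>_. undefined, fG = \<lambda>_. undefined\<rparr>"

lemma empty_foam_ok: "is_foam1 A S empty_foam" "foam_boundary empty_foam = {#}"
  by (auto simp: is_foam1_def empty_foam_def interior_vertices_def foam_boundary_def boundary_vertices_def)

definition cyl :: "'o \<Rightarrow> ('o,'m) foam1" where
  "cyl X = \<lparr>fV = {0, 1}, fE = {0}, fSrc = \<lambda>_. 0, fTgt = \<lambda>_. 1, fFib = \<lambda>_. X,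
    fFirst = \<lambda>_. (0, False), fSecond = \<lambda>_. (0, False), fThick = \<lambda>_. (0, False),
    fF = \<lambda>_. undefined, fG = \<lambda>_. undefined\<rparr>"

lemma cyl_simps[simp]: "fV (cyl X) = {0,1}" "fE (cyl X) = {0}" "fFib (cyl X) e = X" "fSrc (cyl X) e = 0" "fTgt (cyl X) e = 1"
  by (auto simp: cyl_def)

lemma ends_at_cyl: "ends_at (cyl X) v = (if v = 0 then {(0,False)} else if v = 1 then {(0,True)} else {})"
  by (auto simp: ends_at_def cyl_def end_vertex_def split: if_splits)

lemma cyl_ok: "X \<in> S \<Longrightarrow> is_foam1 A S (cyl X)"
  "foam_boundary (cyl X) = {#(False, X), (True, X)#}"
proof -
  have iv: "interior_vertices (cyl X) = {}"
    by (auto simp: interior_vertices_def ends_at_cyl)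
  show "X \<in> S \<Longrightarrow> is_foam1 A S (cyl X)"
    unfolding is_foam1_def iv by (auto simp: ends_at_cyl)
  have bv: "boundary_vertices (cyl X) = {0, 1}"
    by (auto simp: boundary_vertices_def ends_at_cyl)
  show "foam_boundary (cyl X) = {#(False, X), (True, X)#}"
    unfolding foam_boundary_def bv by (simp add: ends_at_cyl)
qed

definition yfoam :: "('o,'m) cat \<Rightarrow> 'm \<Rightarrow> 'm \<Rightarrow> ('o,'m) foam1" where
  "yfoam A f g = \<lparr>fV = {0, 1, 2, 3}, fE = {1, 2, 3},
    fSrc = \<lambda>e. if e = 2 then 0 else e, fTgt = \<lambda>e. if e = 2 then 2 else 0,
    fFib = \<lambda>e. if e = 1 then cDom A f else if e = 2 then cCod A f else cCod A g,
    fFirst = \<lambda>_. (1, True), fSecond = \<lambda>_. (3, True), fThick = \<lambda>_. (2, False),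
    fF = \<lambda>_. f, fG = \<lambda>_. g\<rparr>"

lemma yfoam_simps[simp]: "fV (yfoam A f g) = {0,1,2,3}" "fE (yfoam A f g) = {1,2,3}"
  "fFib (yfoam A f g) e = (if e = 1 then cDom A f else if e = 2 then cCod A f else cCod A g)"
  "fFirst (yfoam A f g) v = (1, True)" "fSecond (yfoam A f g) v = (3, True)" "fThick (yfoam A f g) v = (2, False)"
  "fF (yfoam A f g) v = f" "fG (yfoam A f g) v = g"
  "fSrc (yfoam A f g) e = (if e = 2 then 0 else e)" "fTgt (yfoam A f g) e = (if e = 2 then 2 else 0)"
  by (auto simp: yfoam_def)

lemma ends_at_yfoam: "ends_at (yfoam A f g) v =
   (if v = 0 then {(1,True),(2,False),(3,True)} else if v = 1 then {(1,False)}
    else if v = 2 then {(2,True)} else if v = 3 then {(3,False)} else {})"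
  by (auto simp: ends_at_def yfoam_def end_vertex_def split: if_splits)

lemma yfoam_ok: assumes "exact_in A S f g"
  shows "is_foam1 A S (yfoam A f g)"
  "foam_boundary (yfoam A f g) = {#(False, cDom A f), (True, cCod A f), (False, cCod A g)#}"
proof -
  have iv: "interior_vertices (yfoam A f g) = {0}"
    by (auto simp: interior_vertices_def ends_at_yfoam)
  show "is_foam1 A S (yfoam A f g)"
    unfolding is_foam1_def iv using assms by (auto simp: ends_at_yfoam exact_in_def)
  have bv: "boundary_vertices (yfoam A f g) = {1, 2, 3}"
    by (auto simp: boundary_vertices_def ends_at_yfoam)
  show "foam_boundary (yfoam A f g) = {#(False, cDom A f), (True, cCod A f), (False, cCod A g)#}"
    unfolding foam_boundary_def bv by (simp add: ends_at_yfoam)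
qed

lemma neg_foam0_simps[simp]: "neg_foam0 {#} = {#}" "neg_foam0 (M + N) = neg_foam0 M + neg_foam0 N"
  "neg_foam0 (add_mset x M) = add_mset (\<not> fst x, snd x) (neg_foam0 M)"
  "neg_foam0 (neg_foam0 M) = M"
  by (simp_all add: neg_foam0_def multiset.map_comp case_prod_beta comp_def)

lemma valid_simps[simp]: "valid_foam0 S {#}" "valid_foam0 S (M + N) \<longleftrightarrow> valid_foam0 S M \<and> valid_foam0 S N"
  "valid_foam0 S (add_mset x M) \<longleftrightarrow> snd x \<in> S \<and> valid_foam0 S M"
  "valid_foam0 S (neg_foam0 M) \<longleftrightarrow> valid_foam0 S M"
  by (auto simp: valid_foam0_def neg_foam0_def)

lemma pair_foam:
  fixes A :: "('o,'m) cat"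
  shows "valid_foam0 S N \<Longrightarrow> \<exists>U. is_foam1 A S U \<and> foam_boundary U = N + neg_foam0 N"
proof (induction N)
  case empty
  show ?case by (intro exI[of _ empty_foam]) (simp add: empty_foam_ok)
next
  case (add x N)
  then obtain U where U: "is_foam1 A S U" "foam_boundary U = N + neg_foam0 N" by auto
  obtain s X where x: "x = (s, X)" by fastforce
  have X: "X \<in> S" using add.prems x by simp
  have C: "is_foam1 A S (cyl X)" by (rule cyl_ok(1)[OF X])
  have 1: "is_foam1 A S (foam_union U (cyl X))" by (rule foam_union_is_foam1[OF U(1) C])
  have "foam_boundary (foam_union U (cyl X)) = foam_boundary U + foam_boundary (cyl X :: ('o,'m) foam1)"
    by (rule foam_boundary_union[OF U(1) C])
  also have "\<dots> = N + neg_foam0 N + {#(False, X), (True, X)#}" by (simp only: U cyl_ok)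
  also have "\<dots> = add_mset x N + neg_foam0 (add_mset x N)" unfolding x by (cases s) simp_all
  finally show ?case using 1 by blast
qed

lemma cobordant_add:
  fixes A :: "('o,'m) cat"
  shows "cobordant A S M M' \<Longrightarrow> valid_foam0 S N \<Longrightarrow> cobordant A S (M + N) (M' + N)"
proof -
  assume c: "cobordant A S M M'" and N: "valid_foam0 S N"
  then obtain U where U: "is_foam1 A S U" "foam_boundary U = M' + neg_foam0 M"
    by (auto simp: cobordant_def)
  obtain W where W: "is_foam1 A S W" "foam_boundary W = N + neg_foam0 N" using pair_foam N by blast
  have "foam_boundary (foam_union U W) = (M' + N) + neg_foam0 (M + N)"
    unfolding foam_boundary_union[OF U(1) W(1)] U W by (simp add: ac_simps)
  then show ?thesis using c N foam_union_is_foam1[OF U(1) W(1)] unfolding cobordant_def by auto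
qed

definition sig :: "'o foam0 \<Rightarrow> ('o \<Rightarrow>\<^sub>0 int)" where
  "sig M = sum_mset (image_mset (\<lambda>(s, X). if s then frag_of X else - frag_of X) M)"

definition HH :: "('o,'m) cat \<Rightarrow> 'o set \<Rightarrow> ('o \<Rightarrow>\<^sub>0 int) set" where
  "HH A S = generate (K0_free S) (K0_rels A S)"

lemma sig_simps[simp]: "sig {#} = 0" "sig (M + N) = sig M + sig N"
  "sig (add_mset x M) = (if fst x then frag_of (snd x) else - frag_of (snd x)) + sig M"
  "sig (neg_foam0 M) = - sig M"
proof -
  show "sig {#} = 0" "sig (M + N) = sig M + sig N"
    "sig (add_mset x M) = (if fst x then frag_of (snd x) else - frag_of (snd x)) + sig M"
    by (simp_all add: sig_def case_prod_beta)
  show "sig (neg_foam0 M) = - sig M"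
    by (induction M) (simp_all add: sig_def neg_foam0_def case_prod_beta)
qed

lemma sig_carrier: "valid_foam0 S M \<Longrightarrow> sig M \<in> carrier (K0_free S)"
proof (induction M)
  case (add x M)
  then show ?case
    using keys_add[of "frag_of (snd x)" "sig M"] keys_diff[of "sig M" "frag_of (snd x)"]
    by (auto simp: K0_free_def keys_frag_of)
qed (simp add: K0_free_def)

lemma rels_carrier: "K0_rels A S \<subseteq> carrier (K0_free S)"
proof
  fix r assume "r \<in> K0_rels A S"
  then obtain f g where r: "r = frag_of (cCod A f) - frag_of (cDom A f) - frag_of (cCod A g)"
    and e: "exact_in A S f g" by (auto simp: K0_rels_def)
  have "Poly_Mapping.keys r \<subseteq> {cCod A f, cDom A f, cCod A g}"
    unfolding r using keys_diff[of "frag_of (cCod A f) - frag_of (cDom A f)" "frag_of (cCod A g)"]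
      keys_diff[of "frag_of (cCod A f)" "frag_of (cDom A f)"] by (auto simp: keys_frag_of)
  then show "r \<in> carrier (K0_free S)" using e by (auto simp: K0_free_def exact_in_def)
qed

lemma subgroup_HH: "subgroup (HH A S) (K0_free S)"
  unfolding HH_def K0_free_def
  by (rule group.generate_is_subgroup[OF group_free_Abelian_group rels_carrier[unfolded K0_free_def]])

lemma HH_zero: "0 \<in> HH A S"
  using subgroup.one_closed[OF subgroup_HH[of A S]] by (simp add: K0_free_def)

lemma HH_add: "x \<in> HH A S \<Longrightarrow> y \<in> HH A S \<Longrightarrow> x + y \<in> HH A S"
  using subgroup.m_closed[OF subgroup_HH[of A S], of x y] by (simp add: K0_free_def)

lemma HH_carrier: "x \<in> HH A S \<Longrightarrow> Poly_Mapping.keys x \<subseteq> S"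
  using subgroup.subset[OF subgroup_HH[of A S]] unfolding K0_free_def
  by (metis carrier_free_Abelian_group_iff subsetD)

lemma HH_neg: "x \<in> HH A S \<Longrightarrow> - x \<in> HH A S"
  using subgroup.m_inv_closed[OF subgroup_HH[of A S], of x] HH_carrier[of x A S]
  by (simp add: K0_free_def)

lemma HH_sum: "finite I \<Longrightarrow> (\<And>i. i \<in> I \<Longrightarrow> x i \<in> HH A S) \<Longrightarrow> sum x I \<in> HH A S"
  by (induction I rule: finite_induct) (auto intro: HH_zero HH_add)

lemma rel_in_HH: "exact_in A S f g \<Longrightarrow> frag_of (cCod A f) - frag_of (cDom A f) - frag_of (cCod A g) \<in> HH A S"
  unfolding HH_def by (rule generate.incl) (auto simp: K0_rels_def)

definition wt :: "('o,'m) foam1 \<Rightarrow> nat \<times> bool \<Rightarrow> ('o \<Rightarrow>\<^sub>0 int)" where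
  "wt U eb = (if snd eb then frag_of (fFib U (fst eb)) else - frag_of (fFib U (fst eb)))"

lemma boundary_in_HH:
  assumes U: "is_foam1 A S U"
  shows "sig (foam_boundary U) \<in> HH A S"
proof -
  let ?E = "fE U \<times> (UNIV :: bool set)"
  have fE: "finite (fE U)" and fV: "finite (fV U)" using U by (auto simp: is_foam1_def)
  have fin: "finite ?E" using fE by simp
  have "sum (wt U) ?E = (\<Sum>e\<in>fE U. \<Sum>b\<in>UNIV. wt U (e, b))"
    by (simp add: sum.cartesian_product)
  also have "\<dots> = 0" by (simp add: wt_def UNIV_bool)
  finally have t0: "sum (wt U) ?E = 0" .
  have sub: "end_vertex U ` ?E \<subseteq> fV U"
    using U by (auto simp: is_foam1_def end_vertex_def)
  have "sum (wt U) ?E = (\<Sum>v\<in>fV U. sum (wt U) {x. x \<in> ?E \<and> end_vertex U x = v})"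
    by (rule sum.group[OF fin fV sub, symmetric])
  also have "\<dots> = (\<Sum>v\<in>fV U. sum (wt U) (ends_at U v))"
    by (rule sum.cong) (auto simp: ends_at_def mem_Times_iff)
  finally have t1: "(\<Sum>v\<in>fV U. sum (wt U) (ends_at U v)) = 0" using t0 by simp
  have split: "fV U = boundary_vertices U \<union> interior_vertices U"
    using U by (auto simp: is_foam1_def boundary_vertices_def interior_vertices_def)
  have disj: "boundary_vertices U \<inter> interior_vertices U = {}"
    by (auto simp: boundary_vertices_def interior_vertices_def)
  have fb: "finite (boundary_vertices U)" "finite (interior_vertices U)"
    using fV by (auto simp: boundary_vertices_def interior_vertices_def)
  have t2: "(\<Sum>v\<in>boundary_vertices U. sum (wt U) (ends_at U v)) + (\<Sum>v\<in>interior_vertices U. sum (wt U) (ends_at U v)) = 0"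
    using t1 unfolding split by (simp add: sum.union_disjoint[OF fb disj])
  have bnd: "sig (foam_boundary U) = (\<Sum>v\<in>boundary_vertices U. sum (wt U) (ends_at U v))"
  proof -
    have "sig (foam_boundary U) = (\<Sum>v\<in>boundary_vertices U. (\<lambda>(s, X). if s then frag_of X else - frag_of X)
        (let eb = the_elem (ends_at U v) in (snd eb, fFib U (fst eb))))"
      unfolding sig_def foam_boundary_def sum_unfold_sum_mset multiset.map_comp comp_def ..
    also have "\<dots> = (\<Sum>v\<in>boundary_vertices U. sum (wt U) (ends_at U v))"
    proof (rule sum.cong)
      fix v assume "v \<in> boundary_vertices U"
      then have "card (ends_at U v) = 1" by (simp add: boundary_vertices_def)
      then obtain eb where "ends_at U v = {eb}" by (meson card_1_singletonE)
      then show "(\<lambda>(s, X). if s then frag_of X else - frag_of X)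
        (let eb = the_elem (ends_at U v) in (snd eb, fFib U (fst eb))) = sum (wt U) (ends_at U v)"
        by (simp add: wt_def)
    qed simp
    finally show ?thesis .
  qed
  have all: "\<forall>v\<in>interior_vertices U. ends_at U v = {fFirst U v, fSecond U v, fThick U v} \<and>
        fFirst U v \<noteq> fSecond U v \<and> fFirst U v \<noteq> fThick U v \<and> fSecond U v \<noteq> fThick U v \<and>
        snd (fFirst U v) = snd (fSecond U v) \<and> snd (fThick U v) \<noteq> snd (fFirst U v) \<and>
        exact_in A S (fF U v) (fG U v) \<and>
        cDom A (fF U v) = fFib U (fst (fFirst U v)) \<and>
        cCod A (fF U v) = fFib U (fst (fThick U v)) \<and>
        cCod A (fG U v) = fFib U (fst (fSecond U v))"
    using U unfolding is_foam1_def by (elim conjE) assumption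
  have int: "(\<Sum>v\<in>interior_vertices U. sum (wt U) (ends_at U v)) \<in> HH A S"
  proof (rule HH_sum[OF fb(2)])
    fix v assume v: "v \<in> interior_vertices U"
    have P: "ends_at U v = {fFirst U v, fSecond U v, fThick U v} \<and>
        fFirst U v \<noteq> fSecond U v \<and> fFirst U v \<noteq> fThick U v \<and> fSecond U v \<noteq> fThick U v \<and>
        snd (fFirst U v) = snd (fSecond U v) \<and> snd (fThick U v) \<noteq> snd (fFirst U v) \<and>
        exact_in A S (fF U v) (fG U v) \<and>
        cDom A (fF U v) = fFib U (fst (fFirst U v)) \<and>
        cCod A (fF U v) = fFib U (fst (fThick U v)) \<and>
        cCod A (fG U v) = fFib U (fst (fSecond U v))" by (rule bspec[OF all v])
    let ?r = "frag_of (cCod A (fF U v)) - frag_of (cDom A (fF U v)) - frag_of (cCod A (fG U v))"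
    have r: "?r \<in> HH A S" by (rule rel_in_HH) (use P in \<open>elim conjE\<close>)
    have s: "sum (wt U) (ends_at U v) = wt U (fFirst U v) + wt U (fSecond U v) + wt U (fThick U v)"
      using P by (simp add: add.assoc)
    show "sum (wt U) (ends_at U v) \<in> HH A S"
    proof (cases "snd (fFirst U v)")
      case True
      then have "sum (wt U) (ends_at U v) = - ?r" using P unfolding s wt_def by (simp add: algebra_simps)
      then show ?thesis using HH_neg[OF r] by simp
    next
      case False
      then have "sum (wt U) (ends_at U v) = ?r" using P unfolding s wt_def by (simp add: algebra_simps)
      then show ?thesis using r by simp
    qed
  qed
  have "sig (foam_boundary U) = - (\<Sum>v\<in>interior_vertices U. sum (wt U) (ends_at U v))"
    using t2 bnd by (simp add: eq_neg_iff_add_eq_0)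
  then show ?thesis using HH_neg[OF int] by simp
qed

lemma equivclp_add_aux:
  fixes A :: "('o,'m) cat"
  assumes "equivclp (cobordant A S) M M'" "valid_foam0 S N"
  shows "equivclp (cobordant A S) (M + N) (M' + N)"
  using assms(1) unfolding equivclp_def
proof (induction rule: rtranclp_induct)
  case base then show ?case by simp
next
  case (step y z)
  have "symclp (cobordant A S) (y + N) (z + N)"
    using step(2) cobordant_add[OF _ assms(2)] by (auto simp: symclp_def)
  then show ?case by (rule rtranclp.rtrancl_into_rtrancl[OF step(3)])
qed

lemma valid_of_equivclp:
  fixes A :: "('o,'m) cat"
  assumes "equivclp (cobordant A S) M M'" "valid_foam0 S M"
  shows "valid_foam0 S M'"
  using assms unfolding equivclp_def
  by (induction rule: rtranclp_induct) (auto simp: symclp_def cobordant_def)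

lemma ce_refl: "valid_foam0 S M \<Longrightarrow> cob_equiv A S M M"
  by (simp add: cob_equiv_def)
lemma ce_sym: "cob_equiv A S M N \<Longrightarrow> cob_equiv A S N M"
  by (auto simp: cob_equiv_def intro: equivclp_sym)
lemma ce_trans: "cob_equiv A S M N \<Longrightarrow> cob_equiv A S N K \<Longrightarrow> cob_equiv A S M K"
  unfolding cob_equiv_def using transp_equivclp by (metis transpD)
lemma ce_valid: "cob_equiv A S M N \<Longrightarrow> valid_foam0 S M \<and> valid_foam0 S N"
  by (simp add: cob_equiv_def)
lemma ce_of_cob: "cobordant A S M N \<Longrightarrow> cob_equiv A S M N"
proof -
  assume c: "cobordant A S M N"
  then have "symclp (cobordant A S) M N" by (simp add: symclp_def)
  then have "equivclp (cobordant A S) M N" unfolding equivclp_def by (rule r_into_rtranclp)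
  then show ?thesis using c by (simp add: cob_equiv_def cobordant_def)
qed

lemma ce_add1: "cob_equiv A S M M' \<Longrightarrow> valid_foam0 S N \<Longrightarrow> cob_equiv A S (M + N) (M' + N)"
  unfolding cob_equiv_def using equivclp_add_aux by auto

lemma ce_add: "cob_equiv A S M M' \<Longrightarrow> cob_equiv A S N N' \<Longrightarrow> cob_equiv A S (M + N) (M' + N')"
proof -
  assume a: "cob_equiv A S M M'" "cob_equiv A S N N'"
  have 1: "cob_equiv A S (M + N) (M' + N)" by (rule ce_add1[OF a(1)]) (use ce_valid[OF a(2)] in simp)
  have "cob_equiv A S (N + M') (N' + M')" by (rule ce_add1[OF a(2)]) (use ce_valid[OF a(1)] in simp)
  then have 2: "cob_equiv A S (M' + N) (M' + N')" by (simp add: add.commute)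
  show ?thesis using ce_trans[OF 1 2] .
qed

lemma class_eq: "valid_foam0 S M \<Longrightarrow> cob_class A S M = cob_class A S N \<longleftrightarrow> cob_equiv A S M N"
proof
  assume M: "valid_foam0 S M" and e: "cob_class A S M = cob_class A S N"
  have "M \<in> cob_class A S M" using M ce_refl by (simp add: cob_class_def)
  then have "M \<in> cob_class A S N" using e by simp
  then show "cob_equiv A S M N" by (simp add: cob_class_def ce_sym)
next
  assume e: "cob_equiv A S M N"
  show "cob_class A S M = cob_class A S N"
    unfolding cob_class_def using ce_trans[OF e] ce_trans[OF ce_sym[OF e]] by blast
qed

lemma mult_class: "valid_foam0 S M \<Longrightarrow> valid_foam0 S N \<Longrightarrow>
  cob_class A S M \<otimes>\<^bsub>Cob0 A S\<^esub> cob_class A S N = cob_class A S (M + N)"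
proof -
  assume M: "valid_foam0 S M" and N: "valid_foam0 S N"
  have "{K. \<exists>M1\<in>cob_class A S M. \<exists>M2\<in>cob_class A S N. cob_equiv A S (M1 + M2) K} = cob_class A S (M + N)"
  proof (rule subset_antisym; rule subsetI)
    fix K assume "K \<in> {K. \<exists>M1\<in>cob_class A S M. \<exists>M2\<in>cob_class A S N. cob_equiv A S (M1 + M2) K}"
    then obtain M1 M2 where "cob_equiv A S M M1" "cob_equiv A S N M2" "cob_equiv A S (M1 + M2) K"
      by (auto simp: cob_class_def)
    then show "K \<in> cob_class A S (M + N)" by (simp add: cob_class_def ce_trans[OF ce_add])
  next
    fix K assume "K \<in> cob_class A S (M + N)"
    then have "cob_equiv A S (M + N) K" by (simp add: cob_class_def)
    moreover have "M \<in> cob_class A S M" "N \<in> cob_class A S N" using M N ce_refl by (auto simp: cob_class_def)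
    ultimately show "K \<in> {K. \<exists>M1\<in>cob_class A S M. \<exists>M2\<in>cob_class A S N. cob_equiv A S (M1 + M2) K}" by blast
  qed
  then show ?thesis by (simp add: Cob0_def)
qed

lemma carrier_Cob0: "carrier (Cob0 A S) = {cob_class A S M | M. valid_foam0 S M}"
  by (simp add: Cob0_def)

lemma one_Cob0: "\<one>\<^bsub>Cob0 A S\<^esub> = cob_class A S {#}"
  by (simp add: Cob0_def)

lemma ce_inv: "valid_foam0 S M \<Longrightarrow> cob_equiv A S (neg_foam0 M + M) {#}"
proof -
  assume M: "valid_foam0 S M"
  obtain U where U: "is_foam1 A S U" "foam_boundary U = M + neg_foam0 M" using pair_foam[OF M, of A] by blast
  have "cobordant A S {#} (M + neg_foam0 M)" using M U unfolding cobordant_def by auto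
  then have "cob_equiv A S (M + neg_foam0 M) {#}" by (rule ce_sym[OF ce_of_cob])
  then show ?thesis by (simp add: add.commute)
qed

lemma Cob0_comm_group: "comm_group (Cob0 A S)"
proof (rule comm_groupI)
  fix x y assume "x \<in> carrier (Cob0 A S)" "y \<in> carrier (Cob0 A S)"
  then obtain M N where "x = cob_class A S M" "y = cob_class A S N" "valid_foam0 S M" "valid_foam0 S N"
    by (auto simp: carrier_Cob0)
  then show "x \<otimes>\<^bsub>Cob0 A S\<^esub> y \<in> carrier (Cob0 A S)" "x \<otimes>\<^bsub>Cob0 A S\<^esub> y = y \<otimes>\<^bsub>Cob0 A S\<^esub> x"
    by (auto simp: mult_class carrier_Cob0 ac_simps intro!: exI[of _ "M + N"])
next
  show "\<one>\<^bsub>Cob0 A S\<^esub> \<in> carrier (Cob0 A S)" by (auto simp: carrier_Cob0 one_Cob0)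
next
  fix x y z assume "x \<in> carrier (Cob0 A S)" "y \<in> carrier (Cob0 A S)" "z \<in> carrier (Cob0 A S)"
  then obtain M N K where "x = cob_class A S M" "y = cob_class A S N" "z = cob_class A S K"
     "valid_foam0 S M" "valid_foam0 S N" "valid_foam0 S K"
    by (auto simp: carrier_Cob0)
  then show "x \<otimes>\<^bsub>Cob0 A S\<^esub> y \<otimes>\<^bsub>Cob0 A S\<^esub> z = x \<otimes>\<^bsub>Cob0 A S\<^esub> (y \<otimes>\<^bsub>Cob0 A S\<^esub> z)"
    by (simp add: mult_class ac_simps)
next
  fix x assume "x \<in> carrier (Cob0 A S)"
  then obtain M where M: "x = cob_class A S M" "valid_foam0 S M" by (auto simp: carrier_Cob0)
  then show "\<one>\<^bsub>Cob0 A S\<^esub> \<otimes>\<^bsub>Cob0 A S\<^esub> x = x" by (simp add: one_Cob0 mult_class)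
  have "cob_class A S (neg_foam0 M) \<otimes>\<^bsub>Cob0 A S\<^esub> x = \<one>\<^bsub>Cob0 A S\<^esub>"
    using M by (simp add: one_Cob0 mult_class class_eq ce_inv)
  moreover have "cob_class A S (neg_foam0 M) \<in> carrier (Cob0 A S)" using M by (auto simp: carrier_Cob0)
  ultimately show "\<exists>y\<in>carrier (Cob0 A S). y \<otimes>\<^bsub>Cob0 A S\<^esub> x = \<one>\<^bsub>Cob0 A S\<^esub>" by blast
qed

lemma gamma0_rep_sig: "gamma0_rep A S M = HH A S #>\<^bsub>K0_free S\<^esub> sig M"
  by (simp add: gamma0_rep_def K0_class_def HH_def sig_def)

lemma group_K0_free: "group (K0_free S)"
  by (simp add: K0_free_def)

lemma coset_eq_of_diff:
  assumes "x \<in> carrier (K0_free S)" "y - x \<in> HH A S"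
  shows "HH A S #>\<^bsub>K0_free S\<^esub> x = HH A S #>\<^bsub>K0_free S\<^esub> y"
proof -
  have "y \<in> HH A S #>\<^bsub>K0_free S\<^esub> x"
    unfolding r_coset_def using assms(2) by (auto simp: K0_free_def intro!: bexI[of _ "y - x"])
  then show ?thesis
    by (rule group.repr_independence[OF group_K0_free _ assms(1) subgroup_HH])
qed

lemma gamma_cob: "cobordant A S M N \<Longrightarrow> gamma0_rep A S M = gamma0_rep A S N"
proof -
  assume c: "cobordant A S M N"
  then obtain U where U: "is_foam1 A S U" "foam_boundary U = N + neg_foam0 M" and v: "valid_foam0 S M"
    by (auto simp: cobordant_def)
  have "sig N - sig M \<in> HH A S" using boundary_in_HH[OF U(1)] U(2) by simp
  then show ?thesis unfolding gamma0_rep_sig by (rule coset_eq_of_diff[OF sig_carrier[OF v]])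
qed

lemma gamma_equiv: "cob_equiv A S M N \<Longrightarrow> gamma0_rep A S M = gamma0_rep A S N"
proof -
  assume "cob_equiv A S M N"
  then have "(symclp (cobordant A S))\<^sup>*\<^sup>* M N" by (simp add: cob_equiv_def equivclp_def)
  then show ?thesis
  proof (induction rule: rtranclp_induct)
    case (step y z)
    then show ?case using gamma_cob[of A S y z] gamma_cob[of A S z y] by (auto simp: symclp_def)
  qed simp
qed

lemma K0_comm_group: "comm_group (K0 A S)"
  unfolding K0_def
  using comm_group.abelian_FactGroup[OF abelian_free_Abelian_group[of S] subgroup_HH[of A S, unfolded K0_free_def HH_def]]
  by (simp add: K0_free_def)

lemma gamma0_class: "valid_foam0 S M \<Longrightarrow> gamma0 A S (cob_class A S M) = gamma0_rep A S M"
proof -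
  assume M: "valid_foam0 S M"
  have "gamma0_rep A S ` cob_class A S M = {gamma0_rep A S M}"
  proof
    show "gamma0_rep A S ` cob_class A S M \<subseteq> {gamma0_rep A S M}"
      using gamma_equiv by (fastforce simp: cob_class_def)
    show "{gamma0_rep A S M} \<subseteq> gamma0_rep A S ` cob_class A S M"
      using M ce_refl by (auto simp: cob_class_def)
  qed
  then show ?thesis by (simp add: gamma0_def)
qed

lemma normal_HH: "HH A S \<lhd> K0_free S"
  using comm_group.subgroup_imp_normal[OF abelian_free_Abelian_group[of S] subgroup_HH[of A S, unfolded K0_free_def]]
  by (simp add: K0_free_def)

lemma carrier_K0: "carrier (K0 A S) = (\<lambda>x. HH A S #>\<^bsub>K0_free S\<^esub> x) ` carrier (K0_free S)"
  by (simp add: K0_def HH_def carrier_FactGroup)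

lemma mult_K0: "x \<otimes>\<^bsub>K0 A S\<^esub> y = x <#>\<^bsub>K0_free S\<^esub> y"
  by (simp add: K0_def)

lemma gamma0_hom: "gamma0 A S \<in> Group.hom (Cob0 A S) (K0 A S)"
proof (rule homI)
  fix x assume "x \<in> carrier (Cob0 A S)"
  then obtain M where M: "x = cob_class A S M" "valid_foam0 S M" by (auto simp: carrier_Cob0)
  show "gamma0 A S x \<in> carrier (K0 A S)"
    using M sig_carrier[OF M(2)] by (auto simp: gamma0_class gamma0_rep_sig carrier_K0)
next
  fix x y assume "x \<in> carrier (Cob0 A S)" "y \<in> carrier (Cob0 A S)"
  then obtain M N where M: "x = cob_class A S M" "valid_foam0 S M" and N: "y = cob_class A S N" "valid_foam0 S N"
    by (auto simp: carrier_Cob0)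
  have "gamma0 A S (x \<otimes>\<^bsub>Cob0 A S\<^esub> y) = HH A S #>\<^bsub>K0_free S\<^esub> (sig M + sig N)"
    using M N by (simp add: mult_class gamma0_class gamma0_rep_sig)
  also have "\<dots> = (HH A S #>\<^bsub>K0_free S\<^esub> sig M) <#>\<^bsub>K0_free S\<^esub> (HH A S #>\<^bsub>K0_free S\<^esub> sig N)"
    using normal.rcos_sum[OF normal_HH[of A S] sig_carrier[OF M(2)] sig_carrier[OF N(2)]]
    by (simp add: K0_free_def)
  also have "\<dots> = gamma0 A S x \<otimes>\<^bsub>K0 A S\<^esub> gamma0 A S y"
    using M N by (simp add: mult_K0 gamma0_class gamma0_rep_sig)
  finally show "gamma0 A S (x \<otimes>\<^bsub>Cob0 A S\<^esub> y) = gamma0 A S x \<otimes>\<^bsub>K0 A S\<^esub> gamma0 A S y" .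
qed

lemma sig_surj: "x \<in> carrier (K0_free S) \<Longrightarrow> \<exists>M. valid_foam0 S M \<and> sig M = x"
proof -
  assume "x \<in> carrier (K0_free S)"
  then have k: "Poly_Mapping.keys x \<subseteq> S" by (simp add: K0_free_def)
  show ?thesis
  proof (rule free_Abelian_group_induct[OF k, where P = "\<lambda>x. \<exists>M. valid_foam0 S M \<and> sig M = x"])
    show "\<exists>M. valid_foam0 S M \<and> sig M = 0" by (intro exI[of _ "{#}"]) simp
  next
    fix x y assume "\<exists>M. valid_foam0 S M \<and> sig M = x" "\<exists>M. valid_foam0 S M \<and> sig M = y"
    then obtain M N where "valid_foam0 S M" "sig M = x" "valid_foam0 S N" "sig N = y" by blast
    then show "\<exists>M. valid_foam0 S M \<and> sig M = x - y" by (intro exI[of _ "M + neg_foam0 N"]) simp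
  next
    fix a assume "a \<in> S"
    then show "\<exists>M. valid_foam0 S M \<and> sig M = frag_of a" by (intro exI[of _ "{#(True, a)#}"]) simp
  qed
qed

lemma gamma0_surj: "gamma0 A S ` carrier (Cob0 A S) = carrier (K0 A S)"
proof
  show "gamma0 A S ` carrier (Cob0 A S) \<subseteq> carrier (K0 A S)"
    using gamma0_hom by (rule hom_carrier)
  show "carrier (K0 A S) \<subseteq> gamma0 A S ` carrier (Cob0 A S)"
  proof
    fix z assume "z \<in> carrier (K0 A S)"
    then obtain x where x: "x \<in> carrier (K0_free S)" "z = HH A S #>\<^bsub>K0_free S\<^esub> x"
      by (auto simp: carrier_K0)
    then obtain M where M: "valid_foam0 S M" "sig M = x" using sig_surj by blast
    then have "z = gamma0 A S (cob_class A S M)" using x by (simp add: gamma0_class gamma0_rep_sig)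
    moreover have "cob_class A S M \<in> carrier (Cob0 A S)" using M by (auto simp: carrier_Cob0)
    ultimately show "z \<in> gamma0 A S ` carrier (Cob0 A S)" by blast
  qed
qed

lemma psi_exists:
  fixes A :: "('o,'m) cat"
  obtains \<psi> where "\<psi> \<in> Group.hom (free_Abelian_group S) (Cob0 A S)"
    "\<And>X. X \<in> S \<Longrightarrow> \<psi> (frag_of X) = cob_class A S {#(True, X)#}"
proof -
  interpret C: comm_group "Cob0 A S" by (rule Cob0_comm_group)
  have "(\<lambda>X. cob_class A S {#(True, X)#}) ` S \<subseteq> carrier (Cob0 A S)"
    by (auto simp: carrier_Cob0)
  then show ?thesis using C.free_Abelian_group_universal that by blast
qed

lemma gamma0_inj:
  fixes A :: "('o,'m) cat"
  shows "inj_on (gamma0 A S) (carrier (Cob0 A S))"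
proof -
  interpret C: comm_group "Cob0 A S" by (rule Cob0_comm_group)
  obtain \<psi> where psi: "\<psi> \<in> Group.hom (free_Abelian_group S) (Cob0 A S)"
    "\<And>X. X \<in> S \<Longrightarrow> \<psi> (frag_of X) = cob_class A S {#(True, X)#}"
    using psi_exists by blast
  interpret H: group_hom "free_Abelian_group S" "Cob0 A S" \<psi>
    by (simp add: group_hom_def group_hom_axioms_def psi(1) C.is_group)
  have psi_sig: "\<psi> (sig M) = cob_class A S M" if "valid_foam0 S M" for M
    using that
  proof (induction M)
    case empty
    then show ?case using H.hom_one by (simp add: one_Cob0)
  next
    case (add x M)
    obtain s X where x: "x = (s, X)" by fastforce
    have X: "X \<in> S" and M: "valid_foam0 S M" using add.prems x by auto
    have w: "\<psi> (if s then frag_of X else - frag_of X) = cob_class A S {#x#}"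
    proof (cases s)
      case True then show ?thesis using psi(2)[OF X] x by simp
    next
      case False
      have fc: "frag_of X \<in> carrier (free_Abelian_group S)" using X by simp
      have "\<psi> (- frag_of X) = \<psi> (inv\<^bsub>free_Abelian_group S\<^esub> frag_of X)" using X by (simp add: keys_frag_of)
      also have "\<dots> = inv\<^bsub>Cob0 A S\<^esub> (cob_class A S {#(True, X)#})" using H.hom_inv[OF fc] psi(2)[OF X] by simp
      also have "\<dots> = cob_class A S {#(False, X)#}"
      proof (rule C.inv_equality)
        have "cob_class A S {#(False, X)#} \<otimes>\<^bsub>Cob0 A S\<^esub> cob_class A S {#(True, X)#}
           = cob_class A S (neg_foam0 {#(True, X)#} + {#(True, X)#})"
          using X by (simp add: mult_class)
        also have "\<dots> = cob_class A S {#}"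
          using X ce_inv[of S "{#(True, X)#}" A] class_eq[of S "neg_foam0 {#(True, X)#} + {#(True, X)#}" A "{#}"] by simp
        finally show "cob_class A S {#(False, X)#} \<otimes>\<^bsub>Cob0 A S\<^esub> cob_class A S {#(True, X)#} = \<one>\<^bsub>Cob0 A S\<^esub>"
          by (simp add: one_Cob0)
      qed (use X in \<open>auto simp: carrier_Cob0\<close>)
      finally show ?thesis using False x by simp
    qed
    have wc: "(if s then frag_of X else - frag_of X) \<in> carrier (free_Abelian_group S)" using X by (simp add: keys_frag_of)
    have sc: "sig M \<in> carrier (free_Abelian_group S)" using sig_carrier[OF M] by (simp add: K0_free_def)
    have "\<psi> (sig (add_mset x M)) = \<psi> ((if s then frag_of X else - frag_of X) \<otimes>\<^bsub>free_Abelian_group S\<^esub> sig M)"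
      using x by simp
    also have "\<dots> = cob_class A S {#x#} \<otimes>\<^bsub>Cob0 A S\<^esub> cob_class A S M"
      using H.hom_mult[OF wc sc] w add.IH[OF M] by simp
    also have "\<dots> = cob_class A S (add_mset x M)"
      using X M x by (simp add: mult_class)
    finally show ?case .
  qed
  have rels: "K0_rels A S \<subseteq> kernel (free_Abelian_group S) (Cob0 A S) \<psi>"
  proof
    fix r assume r: "r \<in> K0_rels A S"
    then obtain f g where rf: "r = frag_of (cCod A f) - frag_of (cDom A f) - frag_of (cCod A g)"
      and e: "exact_in A S f g" by (auto simp: K0_rels_def)
    let ?M = "{#(False, cDom A f), (True, cCod A f), (False, cCod A g)#}"
    have v: "valid_foam0 S ?M" using e by (simp add: exact_in_def)
    have sr: "sig ?M = r" unfolding rf by (simp add: algebra_simps)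
    have "cobordant A S {#} ?M"
      using yfoam_ok[OF e] v unfolding cobordant_def by auto
    then have "cob_class A S ?M = cob_class A S {#}"
      using class_eq[OF v, of A "{#}"] ce_sym[OF ce_of_cob] by blast
    then have "\<psi> r = \<one>\<^bsub>Cob0 A S\<^esub>" using psi_sig[OF v] sr by (simp add: one_Cob0)
    moreover have "r \<in> carrier (free_Abelian_group S)" using subsetD[OF rels_carrier[of A S] r] by (simp add: K0_free_def)
    ultimately show "r \<in> kernel (free_Abelian_group S) (Cob0 A S) \<psi>" by (simp add: kernel_def)
  qed
  have HHk: "HH A S \<subseteq> kernel (free_Abelian_group S) (Cob0 A S) \<psi>"
    unfolding HH_def K0_free_def
    by (rule group.generate_subgroup_incl[OF group_free_Abelian_group rels H.subgroup_kernel])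
  show ?thesis
  proof (rule inj_onI)
    fix x y assume "x \<in> carrier (Cob0 A S)" "y \<in> carrier (Cob0 A S)" and eq: "gamma0 A S x = gamma0 A S y"
    then obtain M N where M: "x = cob_class A S M" "valid_foam0 S M" and N: "y = cob_class A S N" "valid_foam0 S N"
      by (auto simp: carrier_Cob0)
    have ce: "HH A S #>\<^bsub>free_Abelian_group S\<^esub> sig M = HH A S #>\<^bsub>free_Abelian_group S\<^esub> sig N"
      using eq M N by (simp add: gamma0_class gamma0_rep_sig K0_free_def)
    have "sig M \<in> HH A S #>\<^bsub>free_Abelian_group S\<^esub> sig M"
      using group.rcos_self[OF group_free_Abelian_group, of "sig M" S "HH A S"] sig_carrier[OF M(2)] subgroup_HH[of A S]
      by (simp add: K0_free_def)
    then have "sig M \<in> HH A S #>\<^bsub>free_Abelian_group S\<^esub> sig N" using ce by simp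
    then obtain h where h: "h \<in> HH A S" "sig M = h + sig N" by (auto simp: r_coset_def)
    have hc: "h \<in> carrier (free_Abelian_group S)" and h1: "\<psi> h = \<one>\<^bsub>Cob0 A S\<^esub>"
      using HHk h(1) by (auto simp: kernel_def)
    have sc: "sig N \<in> carrier (free_Abelian_group S)" using sig_carrier[OF N(2)] by (simp add: K0_free_def)
    have "\<psi> (sig M) = \<psi> (h \<otimes>\<^bsub>free_Abelian_group S\<^esub> sig N)" using h(2) by simp
    also have "\<dots> = \<psi> (sig N)" using H.hom_mult[OF hc sc] h1 H.hom_closed[OF sc] by simp
    finally show "x = y" using psi_sig M N by simp
  qed
qed

theorem mainTheorem5:
  fixes A :: "('o, 'm) cat" and S :: "'o set"
  assumes "exact_category A S"
  shows "(\<forall>M N. cob_equiv A S M N \<longrightarrow> gamma0_rep A S M = gamma0_rep A S N) \<and>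
         comm_group (Cob0 A S) \<and> comm_group (K0 A S) \<and>
         gamma0 A S \<in> iso (Cob0 A S) (K0 A S)"
  unfolding iso_iff
  using gamma_equiv[of A S] Cob0_comm_group[of A S] K0_comm_group[of A S] gamma0_hom[of A S]
    gamma0_surj[of A S] gamma0_inj[of A S] by blast

end
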